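(* Let $\alpha,\beta\in\{-1,0,1\}$, and let $\tilde{C}\in\{0,1\}^{\tilde{K}\times n}$ and $\hat{C}\in\{0,1\}^{\hat{K}\times n}$ be cost matrices of two ordinal objectives on the same $n$ elements. Then the matrix \[ A=\begin{pmatrix}\alpha\,\tilde{C}\\ \beta\,\hat{C}\end{pmatrix} \] is totally unimodular.
   Context: An ordinal objective on $n$ elements with $K$ categories $\eta_1\prec\dots\prec\eta_K$ is given by an assignment $o:\{1,\dots,n\}\to\{\eta_1,\dots,\eta_K\}$; its cost matrix $C\in\{0,1\}^{K\times n}$ has $C_{ji}=1$ if $j\le k$ where $o(i)=\eta_k$, and $C_{ji}=0$ otherwise (each column consists of ones in rows $1,\dots,k$ for some $k\ge1$, followed by zeros). $\tilde{C}$ and $\hat{C}$ are such matrices for assignments $\tilde{o}$ (with $\tilde{K}$ categories) and $\hat{o}$ (with $\hat{K}$ categories). A matrix is totally unimodular if every square submatrix has determinant in $\{-1,0,1\}$. *)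

theory Defs
  imports "Jordan_Normal_Form.Determinant" "Jordan_Normal_Form.DL_Submatrix"
begin

text \<open>An ordinal objective on elements 0..n-1 with K categories eta_1 < ... < eta_K
  is an assignment o of a category index in {1..K} to every element i < n.\<close>
definition ordinal_assignment :: "nat \<Rightarrow> nat \<Rightarrow> (nat \<Rightarrow> nat) \<Rightarrow> bool" where
  "ordinal_assignment K n asg \<longleftrightarrow> (\<forall>i<n. 1 \<le> asg i \<and> asg i \<le> K)"

text \<open>Cost matrix (rows/columns 0-indexed): row j (category eta_(j+1)), column i
  has entry 1 iff j+1 \<le> asg i, i.e. j < asg i.\<close>
definition ordinal_cost_matrix :: "nat \<Rightarrow> nat \<Rightarrow> (nat \<Rightarrow> nat) \<Rightarrow> int mat" where
  "ordinal_cost_matrix K n asg = mat K n (\<lambda>(j, i). if j < asg i then 1 else 0)"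

definition totally_unimodular :: "int mat \<Rightarrow> bool" where
  "totally_unimodular A \<longleftrightarrow>
     (\<forall>I J. I \<subseteq> {..<dim_row A} \<longrightarrow> J \<subseteq> {..<dim_col A} \<longrightarrow> card I = card J \<longrightarrow>
        det (submatrix A I J) \<in> {-1, 0, 1})"

end

theory Submission
  imports Defs
begin

definition icls :: "int mat \<Rightarrow> nat \<Rightarrow> (nat \<Rightarrow> int) \<Rightarrow> (nat \<Rightarrow> int) \<Rightarrow> (nat \<Rightarrow> int) \<Rightarrow> (nat \<Rightarrow> int) \<Rightarrow> bool" where
  "icls B m p l u s \<longleftrightarrow> B \<in> carrier_mat m m \<and> inj_on p {..<m} \<and> (\<forall>r<m. s r \<in> {-1,0,1}) \<and>
     (\<forall>r<m. \<forall>c<m. B $$ (r,c) = s r * (if l c \<le> p r \<and> p r < u c then 1 else 0))"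

lemma core: "icls B m p l u s \<Longrightarrow> det B \<in> {-1,0,1}"
proof (induction m arbitrary: B p l u s)
  case 0
  then show ?case unfolding icls_def by (simp add: det_def')
next
  case (Suc m)
  note IH = Suc.IH
  obtain r0 where r0: "r0 < Suc m" "\<And>r. r < Suc m \<Longrightarrow> p r0 \<le> p r"
  proof -
    have "finite (p ` {..<Suc m})" "p ` {..<Suc m} \<noteq> {}" by auto
    then have "Min (p ` {..<Suc m}) \<in> p ` {..<Suc m}" by (rule Min_in)
    then obtain r0 where "r0 < Suc m" "p r0 = Min (p ` {..<Suc m})" by auto
    then show ?thesis using that by auto
  qed
  have main: "\<And>B l u. icls B (Suc m) p l u s \<Longrightarrow> card {c. c < Suc m \<and> l c \<le> p r0 \<and> p r0 < u c} = k
     \<Longrightarrow> det B \<in> {-1,0,1}" for k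
  proof (induction k rule: less_induct)
    case (less k B l u)
    let ?S = "{c. c < Suc m \<and> l c \<le> p r0 \<and> p r0 < u c}"
    have B: "B \<in> carrier_mat (Suc m) (Suc m)" and ent: "\<And>r c. r < Suc m \<Longrightarrow> c < Suc m \<Longrightarrow> B $$ (r,c) = s r * (if l c \<le> p r \<and> p r < u c then 1 else 0)"
      and injp: "inj_on p {..<Suc m}" and sr: "\<And>r. r < Suc m \<Longrightarrow> s r \<in> {-1,0,1}"
      using less.prems(1) unfolding icls_def by auto
    have fin: "finite ?S" by auto
    have lap: "det B = (\<Sum>j<Suc m. B $$ (r0,j) * cofactor B r0 j)"
      by (rule laplace_expansion_row[OF B r0(1)])
    consider "k = 0" | "k = 1" | "k \<ge> 2" by linarith
    then show ?case
    proof cases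
      case 1
      then have "?S = {}" using less.prems(2) fin by auto
      then have "\<And>j. j < Suc m \<Longrightarrow> B $$ (r0,j) = 0" using ent r0 by auto
      then show ?thesis using lap by simp
    next
      case 2
      then obtain c0 where Sc: "?S = {c0}" using less.prems(2) card_1_singletonE by blast
      then have c0: "c0 < Suc m" by auto
      have "\<And>j. j < Suc m \<Longrightarrow> j \<noteq> c0 \<Longrightarrow> B $$ (r0,j) = 0" using ent r0 Sc by auto
      then have "det B = (\<Sum>j<Suc m. if j = c0 then B $$ (r0,c0) * cofactor B r0 c0 else 0)"
        unfolding lap by (intro sum.cong) auto
      also have "\<dots> = B $$ (r0,c0) * cofactor B r0 c0" using c0 by simp
      finally have dB: "det B = B $$ (r0,c0) * cofactor B r0 c0" .
      let ?ir = "\<lambda>i. if i < r0 then i else Suc i"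
      let ?ic = "\<lambda>j. if j < c0 then j else Suc j"
      have "icls (mat_delete B r0 c0) m (p \<circ> ?ir) (l \<circ> ?ic) (u \<circ> ?ic) (s \<circ> ?ir)"
        unfolding icls_def
      proof (intro conjI allI impI)
        show "mat_delete B r0 c0 \<in> carrier_mat m m" using mat_delete_carrier[OF B] by simp
        show "inj_on (p \<circ> ?ir) {..<m}"
        proof (rule inj_onI)
          fix x y assume xy: "x \<in> {..<m}" "y \<in> {..<m}" "(p \<circ> ?ir) x = (p \<circ> ?ir) y"
          then have "?ir x = ?ir y" using inj_onD[OF injp, of "?ir x" "?ir y"] by auto
          then show "x = y" by (auto split: if_splits)
        qed
      next
        fix r assume "r < m" then show "(s \<circ> ?ir) r \<in> {-1,0,1}" using sr by simp
      next
        fix r c assume r: "r < m" and c: "c < m"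
        have "mat_delete B r0 c0 $$ (r,c) = B $$ (?ir r, ?ic c)"
          unfolding mat_delete_def using B r c by simp
        also have "\<dots> = s (?ir r) * (if l (?ic c) \<le> p (?ir r) \<and> p (?ir r) < u (?ic c) then 1 else 0)"
          by (rule ent) (use r c in auto)
        finally show "mat_delete B r0 c0 $$ (r,c) = (s \<circ> ?ir) r * (if (l \<circ> ?ic) c \<le> (p \<circ> ?ir) r \<and> (p \<circ> ?ir) r < (u \<circ> ?ic) c then 1 else 0)"
          by simp
      qed
      then have "det (mat_delete B r0 c0) \<in> {-1,0,1}" by (rule IH)
      moreover have "B $$ (r0,c0) \<in> {-1,0,1}" using ent[OF r0(1) c0] sr[OF r0(1)] by auto
      ultimately show ?thesis unfolding dB cofactor_def
        by (auto simp: minus_one_power_iff)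
    next
      case 3
      then have "card ?S \<ge> 2" using less.prems(2) by simp
      then have "?S \<noteq> {}" by (metis card.empty not_numeral_le_zero)
      then obtain c1 where c1: "c1 \<in> ?S" by blast
      have "card (?S - {c1}) \<ge> 1" using card_Diff_singleton[OF c1] \<open>card ?S \<ge> 2\<close> by simp
      then have "?S - {c1} \<noteq> {}" by (metis card.empty not_one_le_zero)
      then obtain c2 where c2: "c2 \<in> ?S" "c2 \<noteq> c1" by blast
      obtain a b where ab: "a \<in> ?S" "b \<in> ?S" "a \<noteq> b" "u a \<le> u b"
      proof (cases "u c1 \<le> u c2")
        case True then show ?thesis using that[of c1 c2] c1 c2 by auto
      next
        case False then show ?thesis using that[of c2 c1] c1 c2 by auto
      qed
      let ?B = "addcol (-1) b a B"
      let ?l = "l(b := u a)"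
      have dB: "det ?B = det B" by (rule det_addcol[OF _ _ B]) (use ab in auto)
      have cl: "icls ?B (Suc m) p ?l u s"
        unfolding icls_def
      proof (intro conjI allI impI)
        show "?B \<in> carrier_mat (Suc m) (Suc m)" using B by auto
        fix r c assume r: "r < Suc m" and c: "c < Suc m"
        have pr: "p r0 \<le> p r" using r0(2) r by auto
        show "?B $$ (r,c) = s r * (if ?l c \<le> p r \<and> p r < u c then 1 else 0)"
        proof (cases "c = b")
          case True
          have a1: "a < Suc m" "l a \<le> p r0" "p r0 < u a" using ab by auto
          have b1: "l b \<le> p r0" using ab by auto
          have "?B $$ (r,c) = -1 * B $$ (r,a) + B $$ (r,b)" using True r c B by simp
          also have "\<dots> = - (s r * (if l a \<le> p r \<and> p r < u a then 1 else 0)) + s r * (if l b \<le> p r \<and> p r < u b then 1 else 0)"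
            using ent[OF r a1(1)] ent[OF r, of b] True c by simp
          also have "\<dots> = s r * (if ?l c \<le> p r \<and> p r < u c then 1 else 0)"
            using True pr a1 b1 ab(4) by (auto simp: algebra_simps)
          finally show ?thesis .
        next
          case False
          then show ?thesis using ent[OF r c] r c B by simp
        qed
      qed (use injp sr in auto)
      have "{c. c < Suc m \<and> ?l c \<le> p r0 \<and> p r0 < u c} = ?S - {b}" using ab by auto
      then have "card {c. c < Suc m \<and> ?l c \<le> p r0 \<and> p r0 < u c} < k"
        using less.prems(2) ab fin 3 by (simp add: card_Diff1_less)
      from less.IH[OF this cl refl] show ?thesis unfolding dB .
    qed
  qed
  show ?case by (rule main[OF Suc.prems refl])
qed


lemma append_idx:
  fixes \<alpha> \<beta> :: int and n K1 K2 :: nat and o1 o2 :: "nat \<Rightarrow> nat"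
  assumes r: "r < K1 + K2" and c: "c < n"
  shows "((\<alpha> \<cdot>\<^sub>m ordinal_cost_matrix K1 n o1) @\<^sub>r (\<beta> \<cdot>\<^sub>m ordinal_cost_matrix K2 n o2)) $$ (r,c) =
     (if r < K1 then \<alpha> * (if r < o1 c then 1 else 0) else \<beta> * (if r - K1 < o2 c then 1 else 0))"
  unfolding append_rows_def ordinal_cost_matrix_def using r c
  by (subst index_mat_four_block) auto

theorem theorem1:
  fixes \<alpha> \<beta> :: int and n K1 K2 :: nat and o1 o2 :: "nat \<Rightarrow> nat"
  assumes "\<alpha> \<in> {-1, 0, 1}" and "\<beta> \<in> {-1, 0, 1}"
    and "ordinal_assignment K1 n o1" and "ordinal_assignment K2 n o2"
  shows "totally_unimodular
           ((\<alpha> \<cdot>\<^sub>m ordinal_cost_matrix K1 n o1) @\<^sub>r (\<beta> \<cdot>\<^sub>m ordinal_cost_matrix K2 n o2))"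
proof -
  let ?A = "(\<alpha> \<cdot>\<^sub>m ordinal_cost_matrix K1 n o1) @\<^sub>r (\<beta> \<cdot>\<^sub>m ordinal_cost_matrix K2 n o2)"
  define P :: "nat \<Rightarrow> int" where "P r = (if r < K1 then - int r else int (r - K1) + 1)" for r
  define sg :: "nat \<Rightarrow> int" where "sg r = (if r < K1 then \<alpha> else \<beta>)" for r
  define L :: "nat \<Rightarrow> int" where "L c = 1 - int (o1 c)" for c
  define U :: "nat \<Rightarrow> int" where "U c = int (o2 c) + 1" for c
  have dimA: "?A \<in> carrier_mat (K1 + K2) n"
    by (rule carrier_append_rows) (auto simp: ordinal_cost_matrix_def)
  have entA: "?A $$ (r,c) = sg r * (if L c \<le> P r \<and> P r < U c then 1 else 0)"
    if r: "r < K1 + K2" and c: "c < n" for r c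
    unfolding append_idx[OF r c] using r c
    by (auto simp: sg_def P_def L_def U_def)
  have injP: "inj P" unfolding inj_def P_def by auto
  show ?thesis unfolding totally_unimodular_def
  proof (intro allI impI)
    fix I J assume I: "I \<subseteq> {..<dim_row ?A}" and J: "J \<subseteq> {..<dim_col ?A}" and cIJ: "card I = card J"
    have rA: "dim_row ?A = K1 + K2" and cA: "dim_col ?A = n" using dimA by auto
    have cI: "card {i. i < dim_row ?A \<and> i \<in> I} = card I"
      using I by (intro arg_cong[where f = card]) auto
    have cJ: "card {j. j < dim_col ?A \<and> j \<in> J} = card I"
      proof -
      have "{j. j < dim_col ?A \<and> j \<in> J} = J" using J by auto
      then show ?thesis using cIJ by simp
    qed
    have finI: "finite I" using I finite_subset by blast
    let ?S = "submatrix ?A I J"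
    have "icls ?S (card I) (P \<circ> pick I) (L \<circ> pick J) (U \<circ> pick J) (sg \<circ> pick I)"
      unfolding icls_def
    proof (intro conjI allI impI)
      show "?S \<in> carrier_mat (card I) (card I)" by (rule carrier_matI, rule trans[OF dim_submatrix(1) cI], rule trans[OF dim_submatrix(2) cJ])
      show "inj_on (P \<circ> pick I) {..<card I}"
      proof (rule inj_onI)
        fix x y assume xy: "x \<in> {..<card I}" "y \<in> {..<card I}" "(P \<circ> pick I) x = (P \<circ> pick I) y"
        then have e: "pick I x = pick I y" using injP using injP by (auto dest: injD)
        show "x = y"
        proof (rule ccontr)
          assume "x \<noteq> y"
          then have "x < y \<or> y < x" by auto
          then show False using pick_mono[of x I y] pick_mono[of y I x] xy e by auto
        qed
      qed
    next
      fix r assume "r < card I"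
      then show "(sg \<circ> pick I) r \<in> {-1,0,1}" using assms(1,2) by (auto simp: sg_def)
    next
      fix r c assume r: "r < card I" and c: "c < card I"
      have r': "r < card {i. i < dim_row ?A \<and> i \<in> I}" using r cI by simp
      have c': "c < card {j. j < dim_col ?A \<and> j \<in> J}" using c cJ by simp
      have pr: "pick I r < K1 + K2" using pick_le[OF r'] rA by simp
      have pc: "pick J c < n" using pick_le[OF c'] cA by simp
      show "?S $$ (r,c) = (sg \<circ> pick I) r * (if (L \<circ> pick J) c \<le> (P \<circ> pick I) r \<and> (P \<circ> pick I) r < (U \<circ> pick J) c then 1 else 0)"
        unfolding submatrix_index[OF r' c'] using entA[OF pr pc] by simp
    qed
    then show "det ?S \<in> {-1,0,1}" by (rule core)
  qed
qed

end
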